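(* Let $B$ be an aperiodic Bratteli diagram of finite rank. Suppose there exist $\varepsilon>0$, a strictly increasing sequence of levels $(n_k)$ and vertices $w_k\in V_{n_k}$ such that $m'^{(k)}_{v,w_k}\ge\varepsilon$ for all $k\in\mathbb N$ and all $v\in V_{n_{k+1}}$. Then $\mu(\mathcal O_B(1))=1$.
   Context: A Bratteli diagram $B$ has levels $V_n$ ($V_0=\{v_0\}$) and edge sets $E_n$ from $V_{n-1}$ to $V_n$; incidence matrix $F_n=(f^{(n)}_{v,w})_{v\in V_{n+1},w\in V_n}$ counts edges from $w$ to $v$; aperiodic means every tail-equivalence class of infinite paths is infinite; finite rank means $\sup_n|V_n|<\infty$. Let $M_n=(m^{(n)}_{v,w})$ be the row-stochastic matrix $m^{(n)}_{v,w}=f^{(n)}_{v,w}/\sum_{w'}f^{(n)}_{v,w'}$ (the proportion of edges with range $v\in V_{n+1}$ having source $w\in V_n$), and for a sequence $(n_k)$ let $M'_k=(m'^{(k)}_{v,w})_{v\in V_{n_{k+1}},w\in V_{n_k}}$ be the product $M_{n_{k+1}-1}M_{n_{k+1}-2}\cdots M_{n_k}$. An ordering is a linear order on each $r^{-1}(v)$; $\mathcal O_B$ carries the product measure $\mu$ of uniform measures on the sets of linear orders of the $r^{-1}(v)$. $\mathcal O_B(1)$ is the set of orderings with exactly one maximal infinite path. *)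

theory Defs
  imports "HOL-Probability.Probability"
begin

text \<open>Concrete encoding of a Bratteli diagram B.
  d n = |V_n|, with V_n = {0..<d n};
  f n v w = f^(n)_{v,w} = number of edges from w in V_n to v in V_{n+1}.
  An edge from level n to level n+1 (an element of E_{n+1}) is a triple (w, v, i)
  with w < d n, v < d (Suc n), i < f n v w; source w, range v.\<close>

type_synonym edge = "nat \<times> nat \<times> nat"

definition esrc :: "edge \<Rightarrow> nat" where "esrc e = fst e"
definition erng :: "edge \<Rightarrow> nat" where "erng e = fst (snd e)"

definition is_edge :: "(nat \<Rightarrow> nat) \<Rightarrow> (nat \<Rightarrow> nat \<Rightarrow> nat \<Rightarrow> nat) \<Rightarrow> nat \<Rightarrow> edge \<Rightarrow> bool" where
  "is_edge d f n e \<longleftrightarrow> fst e < d n \<and> fst (snd e) < d (Suc n) \<and> snd (snd e) < f n (fst (snd e)) (fst e)"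

definition bratteli :: "(nat \<Rightarrow> nat) \<Rightarrow> (nat \<Rightarrow> nat \<Rightarrow> nat \<Rightarrow> nat) \<Rightarrow> bool" where
  "bratteli d f \<longleftrightarrow> d 0 = 1 \<and> (\<forall>n. d n \<ge> 1)
     \<and> (\<forall>n v. v < d (Suc n) \<longrightarrow> (\<exists>w < d n. f n v w > 0))
     \<and> (\<forall>n w. w < d n \<longrightarrow> (\<exists>v < d (Suc n). f n v w > 0))"

definition is_path :: "(nat \<Rightarrow> nat) \<Rightarrow> (nat \<Rightarrow> nat \<Rightarrow> nat \<Rightarrow> nat) \<Rightarrow> (nat \<Rightarrow> edge) \<Rightarrow> bool" where
  "is_path d f x \<longleftrightarrow> (\<forall>n. is_edge d f n (x n)) \<and> esrc (x 0) = 0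
     \<and> (\<forall>n. erng (x n) = esrc (x (Suc n)))"

definition tail_equiv :: "(nat \<Rightarrow> edge) \<Rightarrow> (nat \<Rightarrow> edge) \<Rightarrow> bool" where
  "tail_equiv x y \<longleftrightarrow> (\<exists>N. \<forall>n\<ge>N. x n = y n)"

definition aperiodic :: "(nat \<Rightarrow> nat) \<Rightarrow> (nat \<Rightarrow> nat \<Rightarrow> nat \<Rightarrow> nat) \<Rightarrow> bool" where
  "aperiodic d f \<longleftrightarrow> (\<forall>x. is_path d f x \<longrightarrow> infinite {y. is_path d f y \<and> tail_equiv x y})"

definition finite_rank :: "(nat \<Rightarrow> nat) \<Rightarrow> bool" where
  "finite_rank d \<longleftrightarrow> (\<exists>K. \<forall>n. d n \<le> K)"

text \<open>Row-stochastic matrix M_n (rows v in V_{n+1}, columns w in V_n).\<close>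
definition stoch :: "(nat \<Rightarrow> nat) \<Rightarrow> (nat \<Rightarrow> nat \<Rightarrow> nat \<Rightarrow> nat) \<Rightarrow> nat \<Rightarrow> nat \<Rightarrow> nat \<Rightarrow> real" where
  "stoch d f n v w = real (f n v w) / (\<Sum>w'<d n. real (f n v w'))"

text \<open>mprod d f a b = M_{b-1} M_{b-2} ... M_a (rows in V_b, columns in V_a), identity if a = b.\<close>
fun mprod :: "(nat \<Rightarrow> nat) \<Rightarrow> (nat \<Rightarrow> nat \<Rightarrow> nat \<Rightarrow> nat) \<Rightarrow> nat \<Rightarrow> nat \<Rightarrow> nat \<Rightarrow> nat \<Rightarrow> real" where
  "mprod d f a 0 v w = (if v = w then 1 else 0)"
| "mprod d f a (Suc b) v w =
     (if Suc b \<le> a then (if v = w then 1 else 0)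
      else (\<Sum>u<d b. stoch d f b v u * mprod d f a b u w))"

text \<open>Orderings: for each n and v in V_{n+1}, a linear order on r^{-1}(v), encoded as a
  duplicate-free list enumerating r^{-1}(v) in increasing order.\<close>
definition orders :: "(nat \<Rightarrow> nat) \<Rightarrow> (nat \<Rightarrow> nat \<Rightarrow> nat \<Rightarrow> nat) \<Rightarrow> nat \<Rightarrow> nat \<Rightarrow> edge list set" where
  "orders d f n v = {xs. distinct xs \<and> set xs = {e. is_edge d f n e \<and> erng e = v}}"

definition ord_index :: "(nat \<Rightarrow> nat) \<Rightarrow> (nat \<times> nat) set" where
  "ord_index d = {(n, v). v < d (Suc n)}"

definition ord_measure :: "(nat \<Rightarrow> nat) \<Rightarrow> (nat \<Rightarrow> nat \<Rightarrow> nat \<Rightarrow> nat) \<Rightarrow> ((nat \<times> nat) \<Rightarrow> edge list) measure" where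
  "ord_measure d f = PiM (ord_index d) (\<lambda>(n, v). measure_pmf (pmf_of_set (orders d f n v)))"

definition is_max_path :: "(nat \<Rightarrow> nat) \<Rightarrow> (nat \<Rightarrow> nat \<Rightarrow> nat \<Rightarrow> nat) \<Rightarrow> ((nat \<times> nat) \<Rightarrow> edge list) \<Rightarrow> (nat \<Rightarrow> edge) \<Rightarrow> bool" where
  "is_max_path d f om x \<longleftrightarrow> is_path d f x \<and> (\<forall>n. x n = last (om (n, erng (x n))))"

definition O_B1 :: "(nat \<Rightarrow> nat) \<Rightarrow> (nat \<Rightarrow> nat \<Rightarrow> nat \<Rightarrow> nat) \<Rightarrow> ((nat \<times> nat) \<Rightarrow> edge list) set" where
  "O_B1 d f = {om \<in> space (ord_measure d f). \<exists>!x. is_max_path d f om x}"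

end

theory Submission imports Defs "HOL-Combinatorics.Multiset_Permutations" begin

definition Pm :: "(nat \<Rightarrow> nat) \<Rightarrow> (nat \<Rightarrow> nat \<Rightarrow> nat \<Rightarrow> nat) \<Rightarrow> nat \<times> nat \<Rightarrow> edge list pmf" where
  "Pm d f i = pmf_of_set (orders d f (fst i) (snd i))"

lemma ord_measure_eq: "ord_measure d f = PiM (ord_index d) (\<lambda>i. measure_pmf (Pm d f i))"
  unfolding ord_measure_def Pm_def by (simp add: case_prod_beta')

definition inedges :: "(nat \<Rightarrow> nat) \<Rightarrow> (nat \<Rightarrow> nat \<Rightarrow> nat \<Rightarrow> nat) \<Rightarrow> nat \<Rightarrow> nat \<Rightarrow> edge set" where
  "inedges d f n v = {e. is_edge d f n e \<and> erng e = v}"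

lemma inedges_eq: "v < d (Suc n) \<Longrightarrow> inedges d f n v = (\<lambda>(w,i). (w,v,i)) ` (SIGMA w:{..<d n}. {..<f n v w})"
  unfolding inedges_def is_edge_def erng_def by (auto simp: image_iff)

lemma finite_inedges: "v < d (Suc n) \<Longrightarrow> finite (inedges d f n v)"
  by (simp add: inedges_eq)

lemma orders_perm: "orders d f n v = permutations_of_set (inedges d f n v)"
  unfolding orders_def permutations_of_set_def inedges_def by auto

lemma inedges_ne: "bratteli d f \<Longrightarrow> v < d (Suc n) \<Longrightarrow> inedges d f n v \<noteq> {}"
proof -
  assume "bratteli d f" "v < d (Suc n)"
  then obtain w where "w < d n" "f n v w > 0" unfolding bratteli_def by blast
  hence "(w, v, 0) \<in> inedges d f n v" using \<open>v < d (Suc n)\<close> unfolding inedges_def is_edge_def erng_def by simp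
  thus ?thesis by blast
qed

lemma orders_fin_ne: "bratteli d f \<Longrightarrow> v < d (Suc n) \<Longrightarrow> finite (orders d f n v) \<and> orders d f n v \<noteq> {}"
  by (simp add: orders_perm finite_inedges inedges_ne)

lemma last_order: "bratteli d f \<Longrightarrow> v < d (Suc n) \<Longrightarrow> xs \<in> orders d f n v \<Longrightarrow> is_edge d f n (last xs) \<and> erng (last xs) = v"
proof -
  assume a: "bratteli d f" "v < d (Suc n)" "xs \<in> orders d f n v"
  have "xs \<noteq> []" using a inedges_ne[OF a(1,2)] unfolding orders_def inedges_def by auto
  hence "last xs \<in> set xs" by simp
  thus ?thesis using a(3) unfolding orders_def by auto
qed

lemma singleton_PiE: assumes "g \<in> PiE J (\<lambda>_. UNIV)" shows "{g} = PiE J (\<lambda>j. {g j})"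
proof
  show "{g} \<subseteq> PiE J (\<lambda>j. {g j})" using assms by (auto simp: PiE_iff)
  show "PiE J (\<lambda>j. {g j}) \<subseteq> {g}"
  proof
    fix x assume x: "x \<in> PiE J (\<lambda>j. {g j})"
    have x': "x \<in> PiE J (\<lambda>_. UNIV)" using x by (auto simp: PiE_iff)
    have "x = g" by (rule PiE_ext[OF x' assms]) (use x in auto)
    thus "x \<in> {g}" by simp
  qed
qed

lemma sets_Pi_count:
  fixes J :: "(nat \<times> nat) set" and X :: "((nat \<times> nat) \<Rightarrow> edge list) set"
  assumes "finite J" "X \<subseteq> PiE J (\<lambda>_. UNIV)"
  shows "X \<in> sets (PiM J (\<lambda>i. measure_pmf (Q i)))"
proof (rule sigma_algebra.countable[OF sets.sigma_algebra_axioms])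
  fix g assume "g \<in> X"
  hence "{g} = PiE J (\<lambda>j. {g j})" using assms(2) by (intro singleton_PiE) auto
  thus "{g} \<in> sets (PiM J (\<lambda>i. measure_pmf (Q i)))"
    using assms(1) by (simp add: sets_PiM_I_finite)
next
  have "countable (PiE J (\<lambda>_::nat\<times>nat. UNIV :: edge list set))" by (rule countable_PiE) (use assms in auto)
  thus "countable X" using assms(2) countable_subset by blast
qed

lemma bridge:
  fixes J :: "(nat \<times> nat) set" and X :: "((nat \<times> nat) \<Rightarrow> edge list) set"
  assumes J: "finite J" "J \<subseteq> I" and X: "X \<subseteq> PiE J (\<lambda>_. UNIV)"
  shows "prod_emb I (\<lambda>i. measure_pmf (Q i)) J X \<in> sets (PiM I (\<lambda>i. measure_pmf (Q i)))"
    and "emeasure (PiM I (\<lambda>i. measure_pmf (Q i))) (prod_emb I (\<lambda>i. measure_pmf (Q i)) J X)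
         = emeasure (measure_pmf (Pi_pmf J undefined Q)) X"
proof -
  interpret product_prob_space "\<lambda>i. measure_pmf (Q i)" I
    by (intro product_prob_spaceI) (simp add: measure_pmf.prob_space_axioms)
  have XS: "X \<in> sets (PiM J (\<lambda>i. measure_pmf (Q i)))" by (rule sets_Pi_count[OF J(1) X])
  show "prod_emb I (\<lambda>i. measure_pmf (Q i)) J X \<in> sets (PiM I (\<lambda>i. measure_pmf (Q i)))"
    by (rule measurable_prod_emb[OF J(2) XS])
  have "countable (PiE J (\<lambda>_::nat\<times>nat. UNIV :: edge list set))" by (rule countable_PiE) (use J in auto)
  hence cX: "countable X" using X countable_subset by blast
  have pt: "emeasure (PiM J (\<lambda>i. measure_pmf (Q i))) {g} = emeasure (measure_pmf (Pi_pmf J undefined Q)) {g}"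
    if g: "g \<in> X" for g
  proof -
    have gE: "g \<in> PiE J (\<lambda>_. UNIV)" using g X by auto
    hence eq: "{g} = PiE J (\<lambda>j. {g j})" by (rule singleton_PiE)
    have "emeasure (PiM J (\<lambda>i. measure_pmf (Q i))) {g} = (\<Prod>j\<in>J. emeasure (measure_pmf (Q j)) {g j})"
      unfolding eq by (rule emeasure_PiM) (use J in auto)
    also have "\<dots> = (\<Prod>j\<in>J. ennreal (pmf (Q j) (g j)))"
      by (simp add: emeasure_pmf_single)
    also have "\<dots> = ennreal (\<Prod>j\<in>J. pmf (Q j) (g j))"
      by (simp add: prod_ennreal)
    also have "\<dots> = ennreal (pmf (Pi_pmf J undefined Q) g)"
      using gE J by (subst pmf_Pi') (auto simp: PiE_iff extensional_def)
    finally show ?thesis by (simp add: emeasure_pmf_single)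
  qed
  have "emeasure (PiM I (\<lambda>i. measure_pmf (Q i))) (prod_emb I (\<lambda>i. measure_pmf (Q i)) J X)
        = emeasure (PiM J (\<lambda>i. measure_pmf (Q i))) X"
    using emeasure_PiM_emb'[OF J(2) J(1) XS] by simp
  also have "\<dots> = (\<integral>\<^sup>+g. emeasure (PiM J (\<lambda>i. measure_pmf (Q i))) {g} \<partial>count_space X)"
    by (rule emeasure_countable_singleton[OF _ cX]) (intro sets_Pi_count[OF J(1)], use X in auto)
  also have "\<dots> = (\<integral>\<^sup>+g. emeasure (measure_pmf (Pi_pmf J undefined Q)) {g} \<partial>count_space X)"
    by (rule nn_integral_cong) (simp add: pt)
  also have "\<dots> = emeasure (measure_pmf (Pi_pmf J undefined Q)) X"
    by (rule emeasure_countable_singleton[symmetric, OF _ cX]) simp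
  finally show "emeasure (PiM I (\<lambda>i. measure_pmf (Q i))) (prod_emb I (\<lambda>i. measure_pmf (Q i)) J X)
         = emeasure (measure_pmf (Pi_pmf J undefined Q)) X" .
qed

definition sg :: "((nat \<times> nat) \<Rightarrow> edge list) \<Rightarrow> nat \<Rightarrow> nat \<Rightarrow> nat" where
  "sg om n v = fst (last (om (n, v)))"

definition okp :: "(nat \<Rightarrow> nat) \<Rightarrow> (nat \<Rightarrow> nat \<Rightarrow> nat \<Rightarrow> nat) \<Rightarrow> ((nat \<times> nat) \<Rightarrow> edge list) \<Rightarrow> nat \<Rightarrow> nat \<Rightarrow> bool" where
  "okp d f om n v \<longleftrightarrow> is_edge d f n (last (om (n, v))) \<and> erng (last (om (n, v))) = v"

fun walk :: "((nat \<times> nat) \<Rightarrow> edge list) \<Rightarrow> nat \<Rightarrow> nat \<Rightarrow> nat \<Rightarrow> nat" where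
  "walk om a 0 u = u"
| "walk om a (Suc k) u = walk om a k (sg om (a + k) u)"

fun alive :: "(nat \<Rightarrow> nat) \<Rightarrow> (nat \<Rightarrow> nat \<Rightarrow> nat \<Rightarrow> nat) \<Rightarrow> ((nat \<times> nat) \<Rightarrow> edge list) \<Rightarrow> nat \<Rightarrow> nat \<Rightarrow> nat \<Rightarrow> bool" where
  "alive d f om a 0 u = True"
| "alive d f om a (Suc k) u = (okp d f om (a + k) u \<and> alive d f om a k (sg om (a + k) u))"

lemma walk_add: "walk om a (i + j) u = walk om a i (walk om (a + i) j u)"
  by (induction j arbitrary: u) (simp_all add: add.assoc)

lemma alive_add: "alive d f om a (i + j) u = (alive d f om (a + i) j u \<and> alive d f om a i (walk om (a + i) j u))"
  by (induction j arbitrary: u) (auto simp: add.assoc)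

lemma walk_Suc': "walk om a (Suc k) u = sg om a (walk om (Suc a) k u)"
  using walk_add[of om a 1 k u] by simp

lemma alive_Suc': "alive d f om a (Suc k) u = (alive d f om (Suc a) k u \<and> okp d f om a (walk om (Suc a) k u))"
  using alive_add[of d f om a 1 k u] by auto

lemma okp_bound: "okp d f om n v \<Longrightarrow> v < d (Suc n) \<and> sg om n v < d n"
  unfolding okp_def is_edge_def erng_def sg_def by auto

lemma walk_cong: "(\<And>m u. a \<le> m \<Longrightarrow> m < a + k \<Longrightarrow> om (m, u) = om' (m, u)) \<Longrightarrow> walk om a k v = walk om' a k v"
  by (induction k arbitrary: v) (simp_all add: sg_def)

lemma alive_cong: "(\<And>m u. a \<le> m \<Longrightarrow> m < a + k \<Longrightarrow> om (m, u) = om' (m, u)) \<Longrightarrow> alive d f om a k v = alive d f om' a k v"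
proof (induction k arbitrary: v)
  case (Suc k)
  have "okp d f om (a + k) v = okp d f om' (a + k) v" using Suc.prems by (simp add: okp_def)
  moreover have "sg om (a + k) v = sg om' (a + k) v" using Suc.prems by (simp add: sg_def)
  ultimately show ?case using Suc by simp
qed simp

definition chain :: "(nat \<Rightarrow> nat) \<Rightarrow> (nat \<Rightarrow> nat \<Rightarrow> nat \<Rightarrow> nat) \<Rightarrow> ((nat \<times> nat) \<Rightarrow> edge list) \<Rightarrow> (nat \<Rightarrow> nat) \<Rightarrow> bool" where
  "chain d f om p \<longleftrightarrow> (\<forall>m. okp d f om m (p (Suc m)) \<and> sg om m (p (Suc m)) = p m)"

lemma chain_walk: "chain d f om p \<Longrightarrow> alive d f om m N (p (m + N)) \<and> walk om m N (p (m + N)) = p m"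
  by (induction N) (auto simp: chain_def)

lemma max_path_chain:
  assumes "is_max_path d f om x"
  shows "chain d f om (\<lambda>m. esrc (x m))" and "\<And>m. x m = last (om (m, esrc (x (Suc m))))"
    and "\<And>m. esrc (x m) < d m"
proof -
  have p: "is_path d f x" and mx: "\<And>n. x n = last (om (n, erng (x n)))"
    using assms unfolding is_max_path_def by auto
  have r: "\<And>m. erng (x m) = esrc (x (Suc m))" using p unfolding is_path_def by auto
  show xm: "\<And>m. x m = last (om (m, esrc (x (Suc m))))" using mx r by metis
  have e: "\<And>m. is_edge d f m (x m)" using p unfolding is_path_def by auto
  show "\<And>m. esrc (x m) < d m" using e unfolding is_edge_def esrc_def by auto
  show "chain d f om (\<lambda>m. esrc (x m))"
    unfolding chain_def okp_def sg_def
  proof (intro allI conjI)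
    fix m
    show "is_edge d f m (last (om (m, esrc (x (Suc m)))))" using xm[of m, symmetric] e[of m] by simp
    show "erng (last (om (m, esrc (x (Suc m))))) = esrc (x (Suc m))" using xm[of m, symmetric] r[of m] by simp
    show "fst (last (om (m, esrc (x (Suc m))))) = esrc (x m)" using xm[of m, symmetric] by (simp add: esrc_def)
  qed
qed

lemma chain_max_path:
  assumes "bratteli d f" "chain d f om p"
  shows "is_max_path d f om (\<lambda>m. last (om (m, p (Suc m))))"
proof -
  let ?x = "\<lambda>m. last (om (m, p (Suc m)))"
  have c: "\<And>m. okp d f om m (p (Suc m))" "\<And>m. sg om m (p (Suc m)) = p m" using assms(2) unfolding chain_def by auto
  have "p 0 < d 0" using okp_bound[OF c(1)[of 0]] c(2)[of 0] by simp
  hence p0: "p 0 = 0" using assms(1) unfolding bratteli_def by simp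
  have "is_path d f ?x" unfolding is_path_def
  proof (intro conjI allI)
    fix n show "is_edge d f n (?x n)" using c(1)[of n] unfolding okp_def by simp
  next
    show "esrc (?x 0) = 0" using c(2)[of 0] p0 unfolding sg_def esrc_def by simp
  next
    fix n show "erng (?x n) = esrc (?x (Suc n))"
      using c(1)[of n] c(2)[of "Suc n"] unfolding okp_def sg_def esrc_def by simp
  qed
  moreover have "\<And>n. ?x n = last (om (n, erng (?x n)))" using c(1) unfolding okp_def by simp
  ultimately show ?thesis unfolding is_max_path_def by simp
qed

definition ext :: "(nat \<Rightarrow> nat) \<Rightarrow> (nat \<Rightarrow> nat \<Rightarrow> nat \<Rightarrow> nat) \<Rightarrow> ((nat \<times> nat) \<Rightarrow> edge list) \<Rightarrow> nat \<Rightarrow> nat \<Rightarrow> bool" where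
  "ext d f om n u \<longleftrightarrow> (\<forall>N. \<exists>v. alive d f om n N v \<and> walk om n N v = u)"

lemma ext_step:
  assumes "ext d f om m v"
  shows "\<exists>v'. ext d f om (Suc m) v' \<and> okp d f om m v' \<and> sg om m v' = v"
proof -
  define \<Phi> where "\<Phi> N c \<longleftrightarrow> okp d f om m c \<and> sg om m c = v \<and> (\<exists>y. alive d f om (Suc m) N y \<and> walk om (Suc m) N y = c)" for N c
  have all: "\<exists>c<d (Suc m). \<Phi> N c" for N
  proof -
    obtain y where y: "alive d f om m (Suc N) y" "walk om m (Suc N) y = v"
      using assms unfolding ext_def by blast
    let ?c = "walk om (Suc m) N y"
    have "alive d f om (Suc m) N y" "okp d f om m ?c" using y(1) alive_Suc' by auto
    moreover have "sg om m ?c = v" using y(2) walk_Suc' by metis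
    ultimately have "\<Phi> N ?c" unfolding \<Phi>_def by blast
    moreover have "?c < d (Suc m)" using okp_bound[OF \<open>okp d f om m ?c\<close>] by simp
    ultimately show ?thesis by blast
  qed
  have down: "\<Phi> N' c" if phi: "\<Phi> N c" and le: "N' \<le> N" for N N' c
  proof -
    obtain y where y: "alive d f om (Suc m) N y" "walk om (Suc m) N y = c" "okp d f om m c" "sg om m c = v"
      using phi unfolding \<Phi>_def by blast
    obtain j where N: "N = N' + j" using le le_Suc_ex by blast
    let ?y = "walk om (Suc m + N') j y"
    have "alive d f om (Suc m) N' ?y" using y(1) alive_add[of d f om "Suc m" N' j y] N by simp
    moreover have "walk om (Suc m) N' ?y = c" using y(2) walk_add[of om "Suc m" N' j y] N by simp
    ultimately show ?thesis using y(3,4) unfolding \<Phi>_def by blast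
  qed
  have "\<exists>c<d (Suc m). \<forall>N. \<Phi> N c"
  proof (rule ccontr)
    assume "\<not> ?thesis"
    hence "\<forall>c. \<exists>N. c < d (Suc m) \<longrightarrow> \<not> \<Phi> N c" by blast
    then obtain Nf where Nf: "\<And>c. c < d (Suc m) \<Longrightarrow> \<not> \<Phi> (Nf c) c" by metis
    define Ns where "Ns = (\<Sum>c<d (Suc m). Nf c)"
    obtain c where c: "c < d (Suc m)" "\<Phi> Ns c" using all by blast
    have "Nf c \<le> Ns" unfolding Ns_def using c(1) by (intro member_le_sum) auto
    thus False using down[OF c(2)] Nf[OF c(1)] by blast
  qed
  then obtain c where "\<forall>N. \<Phi> N c" by blast
  hence "ext d f om (Suc m) c \<and> okp d f om m c \<and> sg om m c = v"
    unfolding ext_def \<Phi>_def by blast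
  thus ?thesis by blast
qed

lemma koenig:
  assumes br: "bratteli d f" and al: "alive d f om 0 n0 u" and ex: "ext d f om n0 u"
  shows "\<exists>x. is_max_path d f om x \<and> esrc (x n0) = u"
proof -
  define nxt where "nxt m v = (SOME v'. ext d f om (Suc m) v' \<and> okp d f om m v' \<and> sg om m v' = v)" for m v
  have nxt: "ext d f om (Suc m) (nxt m v) \<and> okp d f om m (nxt m v) \<and> sg om m (nxt m v) = v"
    if "ext d f om m v" for m v
    unfolding nxt_def using someI_ex[OF ext_step[OF that]] .
  define up where "up = rec_nat u (\<lambda>j w. nxt (n0 + j) w)"
  have up0: "up 0 = u" and upS: "\<And>j. up (Suc j) = nxt (n0 + j) (up j)" unfolding up_def by simp_all
  have inv: "ext d f om (n0 + j) (up j)" for j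
    by (induction j) (simp_all add: up0 upS ex nxt)
  define p where "p m = (if m < n0 then walk om m (n0 - m) u else up (m - n0))" for m
  have "chain d f om p" unfolding chain_def
  proof
    fix m
    show "okp d f om m (p (Suc m)) \<and> sg om m (p (Suc m)) = p m"
    proof (cases "m < n0")
      case True
      define j where "j = n0 - Suc m"
      have n0: "n0 = Suc m + j" using True unfolding j_def by simp
      have pS: "p (Suc m) = walk om (Suc m) j u"
        unfolding p_def j_def using True by (cases "Suc m < n0") (simp_all add: up0)
      have pm: "p m = walk om m (Suc j) u" unfolding p_def using True n0 by simp
      have "alive d f om 0 (Suc m) (walk om (Suc m) j u)"
        using al alive_add[of d f om 0 "Suc m" j u] n0 by simp
      hence "okp d f om m (walk om (Suc m) j u)" by simp
      moreover have "sg om m (walk om (Suc m) j u) = walk om m (Suc j) u" by (simp only: walk_Suc')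
      ultimately show ?thesis using pS pm by simp
    next
      case False
      have pS: "p (Suc m) = nxt m (p m)"
        unfolding p_def using False upS[of "m - n0"] by (simp add: Suc_diff_le)
      have "ext d f om m (p m)" using inv[of "m - n0"] False unfolding p_def by simp
      thus ?thesis using nxt pS by simp
    qed
  qed
  hence "is_max_path d f om (\<lambda>m. last (om (m, p (Suc m))))" by (rule chain_max_path[OF br])
  moreover have "esrc (last (om (n0, p (Suc n0)))) = u"
  proof -
    have "sg om n0 (p (Suc n0)) = p n0" using \<open>chain d f om p\<close> unfolding chain_def by blast
    thus ?thesis unfolding p_def sg_def esrc_def by (simp add: up0)
  qed
  ultimately show ?thesis by blast
qed

lemma meas_dep:
  fixes J :: "(nat \<times> nat) set" and P :: "((nat \<times> nat) \<Rightarrow> edge list) \<Rightarrow> bool"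
  assumes J: "finite J" "J \<subseteq> I"
    and dep: "\<And>om. om \<in> PiE I (\<lambda>_. UNIV) \<Longrightarrow> P om = P (restrict om J)"
  shows "{om \<in> space (PiM I (\<lambda>i. measure_pmf (Q i))). P om} \<in> sets (PiM I (\<lambda>i. measure_pmf (Q i)))"
    and "emeasure (PiM I (\<lambda>i. measure_pmf (Q i))) {om \<in> space (PiM I (\<lambda>i. measure_pmf (Q i))). P om}
         = emeasure (measure_pmf (Pi_pmf J undefined Q)) {g. P g}"
proof -
  define X where "X = {g \<in> PiE J (\<lambda>_. UNIV). P g}"
  have XS: "X \<subseteq> PiE J (\<lambda>_. UNIV)" unfolding X_def by blast
  have eq: "{om \<in> space (PiM I (\<lambda>i. measure_pmf (Q i))). P om} = prod_emb I (\<lambda>i. measure_pmf (Q i)) J X"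
  proof (rule set_eqI)
    fix om
    show "om \<in> {om \<in> space (PiM I (\<lambda>i. measure_pmf (Q i))). P om} \<longleftrightarrow> om \<in> prod_emb I (\<lambda>i. measure_pmf (Q i)) J X"
    proof (cases "om \<in> PiE I (\<lambda>_. UNIV)")
      case True
      have "restrict om J \<in> PiE J (\<lambda>_. UNIV)" by simp
      thus ?thesis using True dep[OF True] unfolding prod_emb_def X_def by (simp add: space_PiM)
    next
      case False
      thus ?thesis unfolding prod_emb_def by (simp add: space_PiM)
    qed
  qed
  show "{om \<in> space (PiM I (\<lambda>i. measure_pmf (Q i))). P om} \<in> sets (PiM I (\<lambda>i. measure_pmf (Q i)))"
    unfolding eq by (rule bridge(1)[OF J XS])
  have "emeasure (measure_pmf (Pi_pmf J undefined Q)) X = emeasure (measure_pmf (Pi_pmf J undefined Q)) {g. P g}"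
  proof (rule emeasure_eq_AE)
    show "AE g in measure_pmf (Pi_pmf J undefined Q). (g \<in> X) = (g \<in> {g. P g})"
    proof (rule AE_pmfI)
      fix g assume "g \<in> set_pmf (Pi_pmf J undefined Q)"
      hence "\<forall>x. x \<notin> J \<longrightarrow> g x = undefined" using set_Pi_pmf_subset[OF J(1), of undefined Q] by blast
      hence "g \<in> PiE J (\<lambda>_. UNIV)" by (auto simp: PiE_iff extensional_def)
      thus "(g \<in> X) = (g \<in> {g. P g})" unfolding X_def by simp
    qed
  qed simp_all
  thus "emeasure (PiM I (\<lambda>i. measure_pmf (Q i))) {om \<in> space (PiM I (\<lambda>i. measure_pmf (Q i))). P om}
         = emeasure (measure_pmf (Pi_pmf J undefined Q)) {g. P g}"
    unfolding eq using bridge(2)[OF J XS] by simp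
qed

definition Lv :: "(nat \<Rightarrow> nat) \<Rightarrow> nat \<Rightarrow> nat \<Rightarrow> (nat \<times> nat) set" where
  "Lv d a k = (SIGMA n:{a..<a+k}. {..<d (Suc n)})"

lemma Lv_fin: "finite (Lv d a k)" unfolding Lv_def by auto

lemma Lv_sub: "Lv d a k \<subseteq> ord_index d" unfolding Lv_def ord_index_def by auto

lemma restrict_Lv:
  assumes "om \<in> PiE (ord_index d) (\<lambda>_. UNIV)" "a \<le> m" "m < a + k"
  shows "om (m, u) = restrict om (Lv d a k) (m, u)"
proof (cases "u < d (Suc m)")
  case True thus ?thesis using assms unfolding Lv_def by simp
next
  case False
  hence "(m, u) \<notin> ord_index d" unfolding ord_index_def by simp
  hence "om (m, u) = undefined" using assms(1) by (auto simp: PiE_iff extensional_def)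
  moreover have "(m, u) \<notin> Lv d a k" using False unfolding Lv_def by simp
  ultimately show ?thesis by simp
qed

lemma walk_restrict: "om \<in> PiE (ord_index d) (\<lambda>_. UNIV) \<Longrightarrow> walk om a k v = walk (restrict om (Lv d a k)) a k v"
  by (rule walk_cong) (rule restrict_Lv)

lemma alive_restrict: "om \<in> PiE (ord_index d) (\<lambda>_. UNIV) \<Longrightarrow> alive d f om a k v = alive d f (restrict om (Lv d a k)) a k v"
  by (rule alive_cong) (rule restrict_Lv)

lemma pred_walk: "Measurable.pred (ord_measure d f) (\<lambda>om. walk om a k v = u)"
  unfolding pred_def ord_measure_eq
  by (rule meas_dep(1)[OF Lv_fin Lv_sub]) (simp add: walk_restrict)

lemma pred_alive: "Measurable.pred (ord_measure d f) (\<lambda>om. alive d f om a k v)"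
  unfolding pred_def ord_measure_eq
  by (rule meas_dep(1)[OF Lv_fin Lv_sub]) (simp add: alive_restrict)

lemma pred_ext: "Measurable.pred (ord_measure d f) (\<lambda>om. ext d f om n u)"
  unfolding ext_def using pred_walk pred_alive by measurable

lemma max_path_ext:
  assumes "is_max_path d f om x"
  shows "alive d f om 0 n (esrc (x n)) \<and> ext d f om n (esrc (x n))"
proof -
  have c: "chain d f om (\<lambda>m. esrc (x m))" by (rule max_path_chain(1)[OF assms])
  have "alive d f om 0 n (esrc (x n))" using chain_walk[OF c, of 0 n] by simp
  moreover have "ext d f om n (esrc (x n))" unfolding ext_def
    using chain_walk[OF c, of n] by blast
  ultimately show ?thesis by blast
qed

lemma max_path_eq:
  assumes "is_max_path d f om x" "is_max_path d f om y" "\<And>m. esrc (x m) = esrc (y m)"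
  shows "x = y"
proof
  fix m
  show "x m = y m" using max_path_chain(2)[OF assms(1), of m] max_path_chain(2)[OF assms(2), of m] assms(3)[of "Suc m"] by simp
qed

lemma OB1_char:
  assumes br: "bratteli d f"
  shows "O_B1 d f = {om \<in> space (ord_measure d f). ext d f om 0 0 \<and>
     \<not> (\<exists>n u u'. u \<noteq> u' \<and> alive d f om 0 n u \<and> ext d f om n u \<and> alive d f om 0 n u' \<and> ext d f om n u')}"
proof (rule set_eqI, rule iffI)
  fix om assume "om \<in> O_B1 d f"
  then have sp: "om \<in> space (ord_measure d f)" and ex1: "\<exists>!x. is_max_path d f om x" unfolding O_B1_def by auto
  then obtain x where x: "is_max_path d f om x" by blast
  have "esrc (x 0) = 0" using x unfolding is_max_path_def is_path_def by simp
  hence e0: "ext d f om 0 0" using max_path_ext[OF x, of 0] by simp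
  have "\<not> (\<exists>n u u'. u \<noteq> u' \<and> alive d f om 0 n u \<and> ext d f om n u \<and> alive d f om 0 n u' \<and> ext d f om n u')"
  proof
    assume "\<exists>n u u'. u \<noteq> u' \<and> alive d f om 0 n u \<and> ext d f om n u \<and> alive d f om 0 n u' \<and> ext d f om n u'"
    then obtain n u u' where h: "u \<noteq> u'" "alive d f om 0 n u" "ext d f om n u" "alive d f om 0 n u'" "ext d f om n u'" by blast
    obtain y where y: "is_max_path d f om y" "esrc (y n) = u" using koenig[OF br h(2,3)] by blast
    obtain z where z: "is_max_path d f om z" "esrc (z n) = u'" using koenig[OF br h(4,5)] by blast
    have "y = z" using ex1 y(1) z(1) by blast
    thus False using y(2) z(2) h(1) by simp
  qed
  thus "om \<in> {om \<in> space (ord_measure d f). ext d f om 0 0 \<and>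
     \<not> (\<exists>n u u'. u \<noteq> u' \<and> alive d f om 0 n u \<and> ext d f om n u \<and> alive d f om 0 n u' \<and> ext d f om n u')}"
    using sp e0 by blast
next
  fix om assume "om \<in> {om \<in> space (ord_measure d f). ext d f om 0 0 \<and>
     \<not> (\<exists>n u u'. u \<noteq> u' \<and> alive d f om 0 n u \<and> ext d f om n u \<and> alive d f om 0 n u' \<and> ext d f om n u')}"
  hence sp: "om \<in> space (ord_measure d f)" and e0: "ext d f om 0 0"
    and nd: "\<And>n u u'. u \<noteq> u' \<Longrightarrow> alive d f om 0 n u \<Longrightarrow> ext d f om n u \<Longrightarrow> alive d f om 0 n u' \<Longrightarrow> ext d f om n u' \<Longrightarrow> False"
    by blast+
  obtain x where x: "is_max_path d f om x" using koenig[OF br _ e0] by fastforce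
  have "\<exists>!x. is_max_path d f om x"
  proof (rule ex1I[of "is_max_path d f om" x, OF x])
    fix y assume y: "is_max_path d f om y"
    show "y = x"
    proof (rule max_path_eq[OF y x])
      fix m show "esrc (y m) = esrc (x m)"
        using nd[of "esrc (y m)" "esrc (x m)" m] max_path_ext[OF x, of m] max_path_ext[OF y, of m] by blast
    qed
  qed
  thus "om \<in> O_B1 d f" using sp unfolding O_B1_def by blast
qed

lemma OB1_sets: "bratteli d f \<Longrightarrow> O_B1 d f \<in> sets (ord_measure d f)"
  unfolding OB1_char using pred_ext pred_alive by measurable

lemma card_perm_last:
  assumes "finite E" "e \<in> E"
  shows "card {xs \<in> permutations_of_set E. last xs = e} = fact (card E - 1)"
proof -
  have "{xs \<in> permutations_of_set E. last xs = e} = (\<lambda>ys. ys @ [e]) ` permutations_of_set (E - {e})"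
  proof (rule set_eqI, rule iffI)
    fix xs assume xs: "xs \<in> {xs \<in> permutations_of_set E. last xs = e}"
    hence ne: "xs \<noteq> []" using assms by (auto simp: permutations_of_set_def)
    have xe: "xs = butlast xs @ [e]" using xs ne by (metis (mono_tags, lifting) append_butlast_last_id mem_Collect_eq)
    have "distinct xs" "set xs = E" using xs by (auto simp: permutations_of_set_def)
    have d2: "distinct (butlast xs @ [e])" using xe \<open>distinct xs\<close> by metis
    have s2: "set (butlast xs @ [e]) = E" using xe \<open>set xs = E\<close> by metis
    have "distinct (butlast xs) \<and> set (butlast xs) = E - {e}" using d2 s2 by auto
    hence "butlast xs \<in> permutations_of_set (E - {e})" by (simp add: permutations_of_set_def)
    thus "xs \<in> (\<lambda>ys. ys @ [e]) ` permutations_of_set (E - {e})" using xe by blast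
  next
    fix xs assume "xs \<in> (\<lambda>ys. ys @ [e]) ` permutations_of_set (E - {e})"
    then obtain ys where ys: "ys \<in> permutations_of_set (E - {e})" "xs = ys @ [e]" by blast
    thus "xs \<in> {xs \<in> permutations_of_set E. last xs = e}" using assms(2)
      by (auto simp: permutations_of_set_def)
  qed
  moreover have "inj (\<lambda>ys::'a list. ys @ [e])" by (auto intro: injI)
  ultimately have "card {xs \<in> permutations_of_set E. last xs = e} = card (permutations_of_set (E - {e}))"
    by (simp add: card_image inj_on_def)
  also have "\<dots> = fact (card E - 1)" using assms by (simp add: card_Diff_singleton)
  finally show ?thesis .
qed

lemma card_perm_last_in:
  assumes "finite E" "T \<subseteq> E"
  shows "card {xs \<in> permutations_of_set E. last xs \<in> T} = card T * fact (card E - 1)"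
proof -
  have fT: "finite T" using assms finite_subset by blast
  have "{xs \<in> permutations_of_set E. last xs \<in> T} = (\<Union>e\<in>T. {xs \<in> permutations_of_set E. last xs = e})" by blast
  moreover have "card (\<Union>e\<in>T. {xs \<in> permutations_of_set E. last xs = e}) = (\<Sum>e\<in>T. card {xs \<in> permutations_of_set E. last xs = e})"
    by (rule card_UN_disjoint[OF fT]) auto
  ultimately have "card {xs \<in> permutations_of_set E. last xs \<in> T} = (\<Sum>e\<in>T. card {xs \<in> permutations_of_set E. last xs = e})"
    by simp
  also have "\<dots> = (\<Sum>e\<in>T. fact (card E - 1))" using assms by (intro sum.cong refl card_perm_last) auto
  finally show ?thesis by simp
qed

lemma card_inedges: "v < d (Suc n) \<Longrightarrow> card (inedges d f n v) = (\<Sum>w<d n. f n v w)"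
proof -
  assume v: "v < d (Suc n)"
  have "inj_on (\<lambda>(w,i). (w,v,i)) (SIGMA w:{..<d n}. {..<f n v w})" by (auto simp: inj_on_def)
  thus ?thesis unfolding inedges_eq[where d=d and f=f and n=n and v=v, OF v] by (simp add: card_image card_SigmaI)
qed

lemma prob_last:
  assumes br: "bratteli d f" and v: "v < d (Suc n)" and u: "u < d n"
  shows "measure_pmf.prob (pmf_of_set (orders d f n v)) {xs. fst (last xs) = u} = stoch d f n v u"
proof -
  let ?E = "inedges d f n v"
  let ?T = "{e \<in> ?E. fst e = u}"
  have fE: "finite ?E" using finite_inedges[where d=d and f=f and n=n and v=v, OF v] .
  have neE: "?E \<noteq> {}" using inedges_ne[OF br v] .
  have TE: "?T = (\<lambda>i. (u,v,i)) ` {..<f n v u}" unfolding inedges_eq[where d=d and f=f and n=n and v=v, OF v] using u by (auto simp: image_iff)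
  have cT: "card ?T = f n v u" unfolding TE by (simp add: card_image inj_on_def)
  have lastE: "last xs \<in> ?E" if "xs \<in> permutations_of_set ?E" for xs
  proof -
    have "set xs = ?E" using that by (simp add: permutations_of_set_def)
    hence "xs \<noteq> []" using neE by auto
    thus ?thesis using \<open>set xs = ?E\<close> last_in_set by blast
  qed
  have "orders d f n v \<inter> {xs. fst (last xs) = u} = {xs \<in> permutations_of_set ?E. last xs \<in> ?T}"
    unfolding orders_perm using lastE by blast
  note seteq = this
  have "measure_pmf.prob (pmf_of_set (orders d f n v)) {xs. fst (last xs) = u}
      = real (card (orders d f n v \<inter> {xs. fst (last xs) = u})) / real (card (orders d f n v))"
    by (rule measure_pmf_of_set) (use orders_fin_ne[OF br v] in auto)
  also have "card (orders d f n v \<inter> {xs. fst (last xs) = u}) = card ?T * fact (card ?E - 1)"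
    unfolding seteq by (rule card_perm_last_in[OF fE]) blast
  also have "card (orders d f n v) = fact (card ?E)" by (simp add: orders_perm fE)
  also have "real (card ?T * fact (card ?E - 1)) / real (fact (card ?E)) = real (card ?T) / real (card ?E)"
  proof -
    have "card ?E > 0" using fE neE by (simp add: card_gt_0_iff)
    then obtain m where m: "card ?E = Suc m" using gr0_implies_Suc by blast
    have F: "real (fact m) > 0" by simp
    have "real (card ?T * fact (card ?E - 1)) / real (fact (card ?E)) = (real (card ?T) * real (fact m)) / (real (Suc m) * real (fact m))"
      unfolding m by (simp only: fact_Suc diff_Suc_1 of_nat_mult of_nat_id)
    also have "\<dots> = real (card ?T) / real (Suc m)" by (rule mult_divide_mult_cancel_right) (use F in simp)
    finally show ?thesis unfolding m .
  qed
  also have "\<dots> = stoch d f n v u" unfolding stoch_def cT card_inedges[where d=d and f=f and n=n and v=v, OF v] by simp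
  finally show ?thesis .
qed

lemma prob_cong_supp:
  assumes "\<And>x. x \<in> set_pmf M \<Longrightarrow> (x \<in> X) = (x \<in> Y)"
  shows "measure_pmf.prob M X = measure_pmf.prob M Y"
proof -
  have "measure_pmf.prob M X = measure_pmf.prob M (X \<inter> set_pmf M)" by (simp add: measure_Int_set_pmf)
  also have "X \<inter> set_pmf M = Y \<inter> set_pmf M" using assms by blast
  also have "measure_pmf.prob M (Y \<inter> set_pmf M) = measure_pmf.prob M Y" by (simp add: measure_Int_set_pmf)
  finally show ?thesis .
qed

lemma prob_pair: "measure_pmf.prob (pair_pmf M N) (X \<times> Y) = measure_pmf.prob M X * measure_pmf.prob N Y"
proof -
  have "measure_pmf.prob (pair_pmf M N) (X \<times> Y) = measure_pmf.prob (pair_pmf M N) ((X \<inter> set_pmf M) \<times> (Y \<inter> set_pmf N))"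
    by (rule prob_cong_supp) auto
  also have "\<dots> = measure_pmf.prob M (X \<inter> set_pmf M) * measure_pmf.prob N (Y \<inter> set_pmf N)"
    by (rule measure_pmf_prob_product) (simp_all add: countable_Int2 countable_set_pmf)
  also have "\<dots> = measure_pmf.prob M X * measure_pmf.prob N Y" by (simp add: measure_Int_set_pmf)
  finally show ?thesis .
qed

lemma Lv_split: "Lv d a (k1 + k2) = Lv d a k1 \<union> Lv d (a + k1) k2"
  unfolding Lv_def by auto

lemma Lv_disj: "Lv d a k1 \<inter> Lv d (a + k1) k2 = {}"
  unfolding Lv_def by auto

lemma Pi_pmf_supp:
  assumes "finite A" "f \<in> set_pmf (Pi_pmf A undefined Q)" "x \<notin> A"
  shows "f x = undefined"
  using set_Pi_pmf_subset[OF assms(1), of undefined Q] assms(2,3) by blast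

lemma indep_Lv:
  fixes P1 P2 :: "((nat \<times> nat) \<Rightarrow> edge list) \<Rightarrow> bool"
  assumes P1: "\<And>h h'. (\<And>m u. a \<le> m \<Longrightarrow> m < a + k1 \<Longrightarrow> h (m,u) = h' (m,u)) \<Longrightarrow> P1 h = P1 h'"
    and P2: "\<And>h h'. (\<And>m u. a + k1 \<le> m \<Longrightarrow> m < a + k1 + k2 \<Longrightarrow> h (m,u) = h' (m,u)) \<Longrightarrow> P2 h = P2 h'"
  shows "measure_pmf.prob (Pi_pmf (Lv d a (k1 + k2)) undefined Q) {h. P1 h \<and> P2 h}
       = measure_pmf.prob (Pi_pmf (Lv d a k1) undefined Q) {h. P1 h} * measure_pmf.prob (Pi_pmf (Lv d (a + k1) k2) undefined Q) {h. P2 h}"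
proof -
  let ?A = "Lv d a k1" and ?B = "Lv d (a + k1) k2"
  let ?mg = "\<lambda>(f::(nat \<times> nat) \<Rightarrow> edge list, g::(nat \<times> nat) \<Rightarrow> edge list) x. if x \<in> ?A then f x else g x"
  have "Pi_pmf (Lv d a (k1 + k2)) undefined Q = Pi_pmf (?A \<union> ?B) undefined Q" by (simp add: Lv_split)
  also have "\<dots> = map_pmf ?mg (pair_pmf (Pi_pmf ?A undefined Q) (Pi_pmf ?B undefined Q))"
    by (rule Pi_pmf_union) (simp_all add: Lv_fin Lv_disj)
  finally have eq: "Pi_pmf (Lv d a (k1 + k2)) undefined Q = map_pmf ?mg (pair_pmf (Pi_pmf ?A undefined Q) (Pi_pmf ?B undefined Q))" .
  have "measure_pmf.prob (Pi_pmf (Lv d a (k1 + k2)) undefined Q) {h. P1 h \<and> P2 h}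
      = measure_pmf.prob (pair_pmf (Pi_pmf ?A undefined Q) (Pi_pmf ?B undefined Q)) (?mg -` {h. P1 h \<and> P2 h})"
    unfolding eq by simp
  also have "\<dots> = measure_pmf.prob (pair_pmf (Pi_pmf ?A undefined Q) (Pi_pmf ?B undefined Q)) ({h. P1 h} \<times> {h. P2 h})"
  proof (rule prob_cong_supp)
    fix fg assume "fg \<in> set_pmf (pair_pmf (Pi_pmf ?A undefined Q) (Pi_pmf ?B undefined Q))"
    then obtain f g where fg: "fg = (f, g)" "f \<in> set_pmf (Pi_pmf ?A undefined Q)" "g \<in> set_pmf (Pi_pmf ?B undefined Q)"
      by (cases fg) auto
    have fo: "f x = undefined" if "x \<notin> ?A" for x using Pi_pmf_supp[OF Lv_fin fg(2) that] .
    have go: "g x = undefined" if "x \<notin> ?B" for x using Pi_pmf_supp[OF Lv_fin fg(3) that] .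
    have "P1 (?mg (f, g)) = P1 f"
    proof (rule P1)
      fix m u assume "a \<le> m" "m < a + k1"
      hence "(m, u) \<notin> ?B" unfolding Lv_def by auto
      thus "?mg (f, g) (m, u) = f (m, u)" using fo go by auto
    qed
    moreover have "P2 (?mg (f, g)) = P2 g"
    proof (rule P2)
      fix m u assume "a + k1 \<le> m" "m < a + k1 + k2"
      hence "(m, u) \<notin> ?A" unfolding Lv_def by auto
      thus "?mg (f, g) (m, u) = g (m, u)" by auto
    qed
    ultimately show "(fg \<in> ?mg -` {h. P1 h \<and> P2 h}) = (fg \<in> {h. P1 h} \<times> {h. P2 h})" using fg(1) by simp
  qed
  also have "\<dots> = measure_pmf.prob (Pi_pmf ?A undefined Q) {h. P1 h} * measure_pmf.prob (Pi_pmf ?B undefined Q) {h. P2 h}"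
    by (rule prob_pair)
  finally show ?thesis .
qed

lemma Lv1: "Lv d n 1 = (\<lambda>v. (n, v)) ` {..<d (Suc n)}"
  unfolding Lv_def by auto

lemma prob_sg:
  assumes br: "bratteli d f" and S: "S \<subseteq> {..<d (Suc n)}" and tau: "\<And>v. v \<in> S \<Longrightarrow> \<tau> v < d n"
  shows "measure_pmf.prob (Pi_pmf (Lv d n 1) undefined (Pm d f)) {h. \<forall>v\<in>S. sg h n v = \<tau> v}
       = (\<Prod>v\<in>S. stoch d f n v (\<tau> v))"
proof -
  define B where "B x = (if snd x \<in> S then {xs::edge list. fst (last xs) = \<tau> (snd x)} else UNIV)" for x :: "nat \<times> nat"
  have "{h. \<forall>v\<in>S. sg h n v = \<tau> v} = Pi (Lv d n 1) B"
  proof (rule set_eqI)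
    fix h :: "(nat \<times> nat) \<Rightarrow> edge list"
    show "h \<in> {h. \<forall>v\<in>S. sg h n v = \<tau> v} \<longleftrightarrow> h \<in> Pi (Lv d n 1) B"
      unfolding Lv1 B_def sg_def using S by (auto simp: Pi_iff)
  qed
  hence "measure_pmf.prob (Pi_pmf (Lv d n 1) undefined (Pm d f)) {h. \<forall>v\<in>S. sg h n v = \<tau> v}
      = (\<Prod>x\<in>Lv d n 1. measure_pmf.prob (Pm d f x) (B x))"
    by (simp add: measure_Pi_pmf_Pi Lv_fin)
  also have "\<dots> = (\<Prod>v<d (Suc n). measure_pmf.prob (Pm d f (n, v)) (B (n, v)))"
    unfolding Lv1 by (subst prod.reindex) (auto simp: inj_on_def)
  also have "\<dots> = (\<Prod>v<d (Suc n). if v \<in> S then stoch d f n v (\<tau> v) else 1)"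
  proof (rule prod.cong[OF refl])
    fix v assume v: "v \<in> {..<d (Suc n)}"
    show "measure_pmf.prob (Pm d f (n, v)) (B (n, v)) = (if v \<in> S then stoch d f n v (\<tau> v) else 1)"
    proof (cases "v \<in> S")
      case True
      thus ?thesis unfolding B_def Pm_def using prob_last[OF br _ tau[OF True]] v by simp
    qed (simp add: B_def)
  qed
  also have "\<dots> = (\<Prod>v\<in>{..<d (Suc n)} \<inter> S. stoch d f n v (\<tau> v))"
    by (rule prod.inter_restrict[symmetric]) simp
  also have "{..<d (Suc n)} \<inter> S = S" using S by blast
  finally show ?thesis .
qed

lemma stoch_nonneg: "stoch d f n v u \<ge> 0"
  unfolding stoch_def by (simp add: sum_nonneg)

lemma stoch_sum: assumes "bratteli d f" "v < d (Suc n)" shows "(\<Sum>u<d n. stoch d f n v u) = 1"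
proof -
  obtain w where w: "w < d n" "f n v w > 0" using assms unfolding bratteli_def by blast
  have "(\<Sum>u<d n. real (f n v u)) \<ge> real (f n v w)" using w(1) by (intro member_le_sum) auto
  hence pos: "(\<Sum>u<d n. real (f n v u)) > 0" using w(2) by linarith
  show ?thesis unfolding stoch_def using pos by (simp add: sum_divide_distrib[symmetric])
qed

lemma mprod_same: "mprod d f a a v w = (if v = w then 1 else 0)"
  by (cases a) simp_all

lemma mprod_step: "mprod d f a (Suc (a + k)) v w = (\<Sum>u<d (a + k). stoch d f (a + k) v u * mprod d f a (a + k) u w)"
  by simp

lemma mprod_bounds: "bratteli d f \<Longrightarrow> v < d b \<Longrightarrow> 0 \<le> mprod d f a b v w \<and> mprod d f a b v w \<le> 1"
proof (induction b arbitrary: v)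
  case 0 thus ?case by simp
next
  case (Suc b)
  show ?case
  proof (cases "Suc b \<le> a")
    case True thus ?thesis by simp
  next
    case False
    have eq: "mprod d f a (Suc b) v w = (\<Sum>u<d b. stoch d f b v u * mprod d f a b u w)" using False by simp
    have "(\<Sum>u<d b. stoch d f b v u * mprod d f a b u w) \<le> (\<Sum>u<d b. stoch d f b v u * 1)"
      using Suc.IH[OF Suc.prems(1)] by (intro sum_mono mult_left_mono) (auto simp: stoch_nonneg)
    also have "\<dots> = 1" using stoch_sum[OF Suc.prems] by simp
    finally have "mprod d f a (Suc b) v w \<le> 1" unfolding eq .
    moreover have "0 \<le> mprod d f a (Suc b) v w" unfolding eq
      using Suc.IH[OF Suc.prems(1)] by (intro sum_nonneg mult_nonneg_nonneg) (auto simp: stoch_nonneg)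
    ultimately show ?thesis by simp
  qed
qed

lemma prod_image_le:
  fixes H :: "nat \<Rightarrow> real"
  assumes "finite S" "\<And>u. u \<in> \<tau> ` S \<Longrightarrow> 0 \<le> H u \<and> H u \<le> 1"
  shows "(\<Prod>v\<in>S. H (\<tau> v)) \<le> (\<Prod>u\<in>\<tau> ` S. H u)"
  using assms
proof (induction S rule: finite_induct)
  case empty thus ?case by simp
next
  case (insert x S)
  have IH: "(\<Prod>v\<in>S. H (\<tau> v)) \<le> (\<Prod>u\<in>\<tau> ` S. H u)" using insert.IH insert.prems by auto
  have Hx: "0 \<le> H (\<tau> x)" "H (\<tau> x) \<le> 1" using insert.prems by auto
  have nn: "0 \<le> (\<Prod>v\<in>S. H (\<tau> v))" using insert.prems by (intro prod_nonneg) auto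
  show ?case
  proof (cases "\<tau> x \<in> \<tau> ` S")
    case True
    have "(\<Prod>v\<in>insert x S. H (\<tau> v)) = H (\<tau> x) * (\<Prod>v\<in>S. H (\<tau> v))" using insert.hyps by simp
    also have "\<dots> \<le> 1 * (\<Prod>v\<in>S. H (\<tau> v))" using Hx nn by (intro mult_right_mono) auto
    also have "\<dots> \<le> (\<Prod>u\<in>\<tau> ` S. H u)" using IH by simp
    also have "\<tau> ` S = \<tau> ` insert x S" using True by auto
    finally show ?thesis .
  next
    case False
    have "(\<Prod>v\<in>insert x S. H (\<tau> v)) = H (\<tau> x) * (\<Prod>v\<in>S. H (\<tau> v))" using insert.hyps by simp
    also have "\<dots> \<le> H (\<tau> x) * (\<Prod>u\<in>\<tau> ` S. H u)" using Hx IH by (intro mult_left_mono) auto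
    also have "\<dots> = (\<Prod>u\<in>\<tau> ` insert x S. H u)" using False insert.hyps by simp
    finally show ?thesis .
  qed
qed

lemma LB:
  assumes br: "bratteli d f"
  shows "S \<subseteq> {..<d (a + k)} \<Longrightarrow> (\<Prod>v\<in>S. mprod d f a (a + k) v w)
     \<le> measure_pmf.prob (Pi_pmf (Lv d a k) undefined (Pm d f)) {h. \<forall>v\<in>S. walk h a k v = w}"
proof (induction k arbitrary: S)
  case 0
  have fS: "finite S" using 0 finite_subset by blast
  show ?case
  proof (cases "S \<subseteq> {w}")
    case True
    have "(\<Prod>v\<in>S. mprod d f a (a + 0) v w) = (\<Prod>v\<in>S. 1)"
      using True by (intro prod.cong refl) (auto simp: mprod_same)
    moreover have "{h. \<forall>v\<in>S. walk h a 0 v = w} = UNIV" using True by auto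
    ultimately show ?thesis by simp
  next
    case False
    then obtain v where v: "v \<in> S" "v \<noteq> w" by blast
    have "(\<Prod>v\<in>S. mprod d f a (a + 0) v w) = 0"
      using v fS by (intro prod_zero) (auto simp: mprod_same)
    thus ?thesis by simp
  qed
next
  case (Suc k)
  have fS: "finite S" using Suc.prems finite_subset by blast
  let ?P = "Pi_pmf (Lv d a (Suc k)) undefined (Pm d f)"
  let ?H = "\<lambda>u. mprod d f a (a + k) u w"
  define T where "T = PiE S (\<lambda>_. {..<d (a + k)})"
  define pc where "pc \<tau> = {h. (\<forall>u\<in>\<tau> ` S. walk h a k u = w) \<and> (\<forall>v\<in>S. sg h (a + k) v = \<tau> v)}" for \<tau> :: "nat \<Rightarrow> nat"
  have fT: "finite T" unfolding T_def using fS by (simp add: finite_PiE)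
  have sub: "(\<Union>\<tau>\<in>T. pc \<tau>) \<subseteq> {h. \<forall>v\<in>S. walk h a (Suc k) v = w}"
  proof
    fix h assume "h \<in> (\<Union>\<tau>\<in>T. pc \<tau>)"
    then obtain \<tau> where "\<forall>u\<in>\<tau> ` S. walk h a k u = w" "\<forall>v\<in>S. sg h (a + k) v = \<tau> v" unfolding pc_def by blast
    hence "\<forall>v\<in>S. walk h a (Suc k) v = w" by simp
    thus "h \<in> {h. \<forall>v\<in>S. walk h a (Suc k) v = w}" by simp
  qed
  have disj: "disjoint_family_on pc T"
    unfolding disjoint_family_on_def
  proof (intro ballI impI)
    fix \<tau> \<tau>' assume t: "\<tau> \<in> T" "\<tau>' \<in> T" "\<tau> \<noteq> \<tau>'"
    have "\<exists>v\<in>S. \<tau> v \<noteq> \<tau>' v"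
    proof (rule ccontr)
      assume "\<not> (\<exists>v\<in>S. \<tau> v \<noteq> \<tau>' v)"
      hence all: "\<And>v. v \<in> S \<Longrightarrow> \<tau> v = \<tau>' v" by blast
      have "\<tau> = \<tau>'" using t(1,2) unfolding T_def by (rule PiE_ext) (rule all)
      thus False using t(3) by simp
    qed
    then obtain v where v: "v \<in> S" "\<tau> v \<noteq> \<tau>' v" by blast
    show "pc \<tau> \<inter> pc \<tau>' = {}"
    proof (rule equals0I)
      fix h assume "h \<in> pc \<tau> \<inter> pc \<tau>'"
      hence "sg h (a + k) v = \<tau> v" "sg h (a + k) v = \<tau>' v" using v(1) unfolding pc_def by blast+
      thus False using v(2) by simp
    qed
  qed
  have piece: "(\<Prod>v\<in>S. stoch d f (a + k) v (\<tau> v) * ?H (\<tau> v)) \<le> measure_pmf.prob ?P (pc \<tau>)"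
    if t: "\<tau> \<in> T" for \<tau>
  proof -
    have tS: "\<tau> ` S \<subseteq> {..<d (a + k)}" using t unfolding T_def by auto
    have ind: "measure_pmf.prob (Pi_pmf (Lv d a (k + 1)) undefined (Pm d f)) {h. (\<forall>u\<in>\<tau> ` S. walk h a k u = w) \<and> (\<forall>v\<in>S. sg h (a + k) v = \<tau> v)}
       = measure_pmf.prob (Pi_pmf (Lv d a k) undefined (Pm d f)) {h. \<forall>u\<in>\<tau> ` S. walk h a k u = w}
       * measure_pmf.prob (Pi_pmf (Lv d (a + k) 1) undefined (Pm d f)) {h. \<forall>v\<in>S. sg h (a + k) v = \<tau> v}"
    proof (rule indep_Lv)
      fix h h' :: "(nat \<times> nat) \<Rightarrow> edge list"
      assume "\<And>m u. a \<le> m \<Longrightarrow> m < a + k \<Longrightarrow> h (m, u) = h' (m, u)"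
      hence "\<And>u. walk h a k u = walk h' a k u" by (intro walk_cong) auto
      thus "(\<forall>u\<in>\<tau> ` S. walk h a k u = w) = (\<forall>u\<in>\<tau> ` S. walk h' a k u = w)" by simp
    next
      fix h h' :: "(nat \<times> nat) \<Rightarrow> edge list"
      assume "\<And>m u. a + k \<le> m \<Longrightarrow> m < a + k + 1 \<Longrightarrow> h (m, u) = h' (m, u)"
      hence "\<And>v. sg h (a + k) v = sg h' (a + k) v" unfolding sg_def by simp
      thus "(\<forall>v\<in>S. sg h (a + k) v = \<tau> v) = (\<forall>v\<in>S. sg h' (a + k) v = \<tau> v)" by simp
    qed
    have sgp: "measure_pmf.prob (Pi_pmf (Lv d (a + k) 1) undefined (Pm d f)) {h. \<forall>v\<in>S. sg h (a + k) v = \<tau> v}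
       = (\<Prod>v\<in>S. stoch d f (a + k) v (\<tau> v))"
      by (rule prob_sg[OF br]) (use Suc.prems tS in auto)
    have eq: "measure_pmf.prob ?P (pc \<tau>) = measure_pmf.prob (Pi_pmf (Lv d a k) undefined (Pm d f)) {h. \<forall>u\<in>\<tau> ` S. walk h a k u = w}
       * (\<Prod>v\<in>S. stoch d f (a + k) v (\<tau> v))"
      unfolding pc_def using ind sgp by simp
    have H01: "\<And>u. u \<in> \<tau> ` S \<Longrightarrow> 0 \<le> ?H u \<and> ?H u \<le> 1" using tS mprod_bounds[OF br] by blast
    have "(\<Prod>v\<in>S. stoch d f (a + k) v (\<tau> v) * ?H (\<tau> v)) = (\<Prod>v\<in>S. ?H (\<tau> v)) * (\<Prod>v\<in>S. stoch d f (a + k) v (\<tau> v))"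
      by (simp add: prod.distrib mult.commute)
    also have "\<dots> \<le> (\<Prod>u\<in>\<tau> ` S. ?H u) * (\<Prod>v\<in>S. stoch d f (a + k) v (\<tau> v))"
      by (intro mult_right_mono prod_image_le fS H01) (simp_all add: prod_nonneg stoch_nonneg)
    also have "\<dots> \<le> measure_pmf.prob (Pi_pmf (Lv d a k) undefined (Pm d f)) {h. \<forall>u\<in>\<tau> ` S. walk h a k u = w}
       * (\<Prod>v\<in>S. stoch d f (a + k) v (\<tau> v))"
      by (intro mult_right_mono Suc.IH tS) (intro prod_nonneg, simp add: stoch_nonneg)
    finally show ?thesis unfolding eq .
  qed
  have "(\<Prod>v\<in>S. mprod d f a (a + Suc k) v w) = (\<Prod>v\<in>S. \<Sum>u<d (a + k). stoch d f (a + k) v u * ?H u)"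
    by (simp add: mprod_step del: mprod.simps)
  also have "\<dots> = (\<Sum>\<tau>\<in>T. \<Prod>v\<in>S. stoch d f (a + k) v (\<tau> v) * ?H (\<tau> v))"
    unfolding T_def by (rule prod_sum_PiE[OF fS]) simp
  also have "\<dots> \<le> (\<Sum>\<tau>\<in>T. measure_pmf.prob ?P (pc \<tau>))" by (intro sum_mono piece)
  also have "\<dots> = measure_pmf.prob ?P (\<Union>\<tau>\<in>T. pc \<tau>)"
    by (rule measure_pmf.finite_measure_finite_Union[symmetric, OF fT _ disj]) simp
  also have "\<dots> \<le> measure_pmf.prob ?P {h. \<forall>v\<in>S. walk h a (Suc k) v = w}"
    by (rule measure_pmf.finite_measure_mono[OF sub]) simp
  finally show ?case .
qed

definition Aev :: "(nat \<Rightarrow> nat) \<Rightarrow> (nat \<Rightarrow> nat) \<Rightarrow> (nat \<Rightarrow> nat) \<Rightarrow> nat \<Rightarrow> ((nat \<times> nat) \<Rightarrow> edge list) \<Rightarrow> bool" where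
  "Aev d nk wk k om \<longleftrightarrow> (\<forall>v<d (nk (Suc k)). walk om (nk k) (nk (Suc k) - nk k) v = wk k)"

lemma Aev_dep:
  assumes sm: "strict_mono nk" and jk: "j \<le> k" "k < j + L"
    and eq: "\<And>m u. nk j \<le> m \<Longrightarrow> m < nk j + (nk (j + L) - nk j) \<Longrightarrow> h (m, u) = h' (m, u)"
  shows "Aev d nk wk k h = Aev d nk wk k h'"
proof -
  have a: "nk j \<le> nk k" using strict_mono_leD[OF sm jk(1)] .
  have b: "nk (Suc k) \<le> nk (j + L)" using strict_mono_leD[OF sm] jk(2) by simp
  have c: "nk k < nk (Suc k)" using sm by (simp add: strict_monoD)
  have "\<And>v. walk h (nk k) (nk (Suc k) - nk k) v = walk h' (nk k) (nk (Suc k) - nk k) v"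
    by (rule walk_cong) (rule eq, use a b c in auto)
  thus ?thesis unfolding Aev_def by simp
qed

lemma UB:
  assumes sm: "strict_mono nk"
    and lb: "\<And>k. \<delta> \<le> measure_pmf.prob (Pi_pmf (Lv d (nk k) (nk (Suc k) - nk k)) undefined Q) {h. Aev d nk wk k h}"
  shows "measure_pmf.prob (Pi_pmf (Lv d (nk j) (nk (j + L) - nk j)) undefined Q) {h. \<forall>i<L. \<not> Aev d nk wk (j + i) h} \<le> (1 - \<delta>) ^ L"
proof (induction L)
  case 0 thus ?case by simp
next
  case (Suc L)
  define k1 where "k1 = nk (j + L) - nk j"
  define k2 where "k2 = nk (Suc (j + L)) - nk (j + L)"
  have m1: "nk j \<le> nk (j + L)" using strict_mono_leD[OF sm] by simp
  have m2: "nk (j + L) < nk (Suc (j + L))" using sm by (simp add: strict_monoD)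
  have s1: "nk (j + Suc L) - nk j = k1 + k2" unfolding k1_def k2_def using m1 m2 by simp
  have s2: "nk j + k1 = nk (j + L)" unfolding k1_def using m1 by simp
  have set: "{h. \<forall>i<Suc L. \<not> Aev d nk wk (j + i) h} = {h. (\<forall>i<L. \<not> Aev d nk wk (j + i) h) \<and> \<not> Aev d nk wk (j + L) h}"
    by (auto simp: less_Suc_eq)
  have ind: "measure_pmf.prob (Pi_pmf (Lv d (nk j) (k1 + k2)) undefined Q) {h. (\<forall>i<L. \<not> Aev d nk wk (j + i) h) \<and> \<not> Aev d nk wk (j + L) h}
    = measure_pmf.prob (Pi_pmf (Lv d (nk j) k1) undefined Q) {h. \<forall>i<L. \<not> Aev d nk wk (j + i) h}
    * measure_pmf.prob (Pi_pmf (Lv d (nk j + k1) k2) undefined Q) {h. \<not> Aev d nk wk (j + L) h}"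
  proof (rule indep_Lv[where ?P1.0="\<lambda>h. \<forall>i<L. \<not> Aev d nk wk (j + i) h" and ?P2.0="\<lambda>h. \<not> Aev d nk wk (j + L) h"])
    fix h h' :: "(nat \<times> nat) \<Rightarrow> edge list"
    assume e: "\<And>m u. nk j \<le> m \<Longrightarrow> m < nk j + k1 \<Longrightarrow> h (m, u) = h' (m, u)"
    have "\<And>i. i < L \<Longrightarrow> Aev d nk wk (j + i) h = Aev d nk wk (j + i) h'"
      by (rule Aev_dep[OF sm, of j _ L]) (use e in \<open>auto simp: k1_def\<close>)
    thus "(\<forall>i<L. \<not> Aev d nk wk (j + i) h) = (\<forall>i<L. \<not> Aev d nk wk (j + i) h')" by simp
  next
    fix h h' :: "(nat \<times> nat) \<Rightarrow> edge list"
    assume e: "\<And>m u. nk j + k1 \<le> m \<Longrightarrow> m < nk j + k1 + k2 \<Longrightarrow> h (m, u) = h' (m, u)"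
    have "Aev d nk wk (j + L) h = Aev d nk wk (j + L) h'"
      by (rule Aev_dep[OF sm, of "j + L" _ 1]) (use e s2 in \<open>auto simp: k2_def\<close>)
    thus "(\<not> Aev d nk wk (j + L) h) = (\<not> Aev d nk wk (j + L) h')" by simp
  qed
  have p2: "measure_pmf.prob (Pi_pmf (Lv d (nk j + k1) k2) undefined Q) {h. \<not> Aev d nk wk (j + L) h} \<le> 1 - \<delta>"
  proof -
    have "{h. \<not> Aev d nk wk (j + L) h} = UNIV - {h. Aev d nk wk (j + L) h}" by blast
    hence "measure_pmf.prob (Pi_pmf (Lv d (nk j + k1) k2) undefined Q) {h. \<not> Aev d nk wk (j + L) h}
      = 1 - measure_pmf.prob (Pi_pmf (Lv d (nk j + k1) k2) undefined Q) {h. Aev d nk wk (j + L) h}"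
      using measure_pmf.prob_compl[of "{h. Aev d nk wk (j + L) h}" "Pi_pmf (Lv d (nk j + k1) k2) undefined Q"] by simp
    also have "\<dots> \<le> 1 - \<delta>" using lb[of "j + L"] unfolding s2 k2_def by simp
    finally show ?thesis .
  qed
  have "measure_pmf.prob (Pi_pmf (Lv d (nk j) (nk (j + Suc L) - nk j)) undefined Q) {h. \<forall>i<Suc L. \<not> Aev d nk wk (j + i) h}
    = measure_pmf.prob (Pi_pmf (Lv d (nk j) k1) undefined Q) {h. \<forall>i<L. \<not> Aev d nk wk (j + i) h}
    * measure_pmf.prob (Pi_pmf (Lv d (nk j + k1) k2) undefined Q) {h. \<not> Aev d nk wk (j + L) h}"
    unfolding s1 set ind ..
  also have "\<dots> \<le> (1 - \<delta>) ^ L * (1 - \<delta>)"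
  proof -
    have "\<delta> \<le> 1" using lb[of 0] measure_pmf.prob_le_1 order_trans by blast
    thus ?thesis using Suc.IH p2 unfolding k1_def by (intro mult_mono) auto
  qed
  finally show ?case by (simp add: mult.commute)
qed

definition valid :: "(nat \<Rightarrow> nat) \<Rightarrow> (nat \<Rightarrow> nat \<Rightarrow> nat \<Rightarrow> nat) \<Rightarrow> ((nat \<times> nat) \<Rightarrow> edge list) \<Rightarrow> bool" where
  "valid d f om \<longleftrightarrow> (\<forall>n v. v < d (Suc n) \<longrightarrow> om (n, v) \<in> orders d f n v)"

lemma valid_okp: "bratteli d f \<Longrightarrow> valid d f om \<Longrightarrow> v < d (Suc n) \<Longrightarrow> okp d f om n v"
  unfolding valid_def okp_def using last_order by blast

lemma valid_alive_walk:
  assumes br: "bratteli d f" and va: "valid d f om"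
  shows "v < d (a + k) \<Longrightarrow> alive d f om a k v \<and> walk om a k v < d a"
proof (induction k arbitrary: v)
  case 0 thus ?case by simp
next
  case (Suc k)
  have ok: "okp d f om (a + k) v" using valid_okp[OF br va] Suc.prems by simp
  hence "sg om (a + k) v < d (a + k)" using okp_bound by blast
  thus ?case using Suc.IH ok by simp
qed

lemma valid_ext00:
  assumes br: "bratteli d f" and va: "valid d f om"
  shows "ext d f om 0 0"
  unfolding ext_def
proof
  fix N
  have "d N \<ge> 1" using br unfolding bratteli_def by blast
  hence "0 < d N" by simp
  hence "alive d f om 0 N 0 \<and> walk om 0 N 0 < d 0" using valid_alive_walk[OF br va, of 0 0 N] by simp
  moreover have "d 0 = 1" using br unfolding bratteli_def by simp
  ultimately show "\<exists>v. alive d f om 0 N v \<and> walk om 0 N v = 0" by auto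
qed

lemma final_det:
  assumes br: "bratteli d f" and sm: "strict_mono nk" and sp: "om \<in> space (ord_measure d f)"
    and va: "valid d f om" and io: "\<And>j. \<exists>i. Aev d nk wk (j + i) om"
  shows "om \<in> O_B1 d f"
proof -
  obtain x where x: "is_max_path d f om x" using koenig[OF br _ valid_ext00[OF br va]] by fastforce
  have key: "esrc (z m) = walk om m (nk (m + i) - m) (wk (m + i))" if z: "is_max_path d f om z"
    and A: "Aev d nk wk (m + i) om" for z m i
  proof -
    let ?k = "m + i"
    let ?p = "\<lambda>m. esrc (z m)"
    have c: "chain d f om ?p" by (rule max_path_chain(1)[OF z])
    have lt: "nk ?k < nk (Suc ?k)" using sm by (simp add: strict_monoD)
    have mk: "m \<le> nk ?k" using seq_suble[OF sm, of ?k] by simp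
    have s1: "nk ?k + (nk (Suc ?k) - nk ?k) = nk (Suc ?k)" using lt by simp
    have e1: "walk om (nk ?k) (nk (Suc ?k) - nk ?k) (?p (nk (Suc ?k))) = ?p (nk ?k)"
      using chain_walk[OF c, of "nk ?k" "nk (Suc ?k) - nk ?k"] unfolding s1 by blast
    have bd: "?p (nk (Suc ?k)) < d (nk (Suc ?k))" by (rule max_path_chain(3)[OF z])
    have "walk om (nk ?k) (nk (Suc ?k) - nk ?k) (?p (nk (Suc ?k))) = wk ?k"
      using A bd unfolding Aev_def by blast
    hence pk: "?p (nk ?k) = wk ?k" using e1 by simp
    have s2: "m + (nk ?k - m) = nk ?k" using mk by simp
    have "walk om m (nk ?k - m) (?p (nk ?k)) = ?p m"
      using chain_walk[OF c, of m "nk ?k - m"] unfolding s2 by blast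
    thus ?thesis using pk by simp
  qed
  have "\<exists>!x. is_max_path d f om x"
  proof (rule ex1I[of "is_max_path d f om" x, OF x])
    fix y assume y: "is_max_path d f om y"
    show "y = x"
    proof (rule max_path_eq[OF y x])
      fix m
      obtain i where Ai: "Aev d nk wk (m + i) om" using io by blast
      show "esrc (y m) = esrc (x m)" using key[OF y Ai] key[OF x Ai] by simp
    qed
  qed
  thus ?thesis using sp unfolding O_B1_def by blast
qed

lemma pred_Aev: "Measurable.pred (ord_measure d f) (\<lambda>om. Aev d nk wk k om)"
  unfolding Aev_def using pred_walk by measurable

lemma null_tail:
  assumes br: "bratteli d f" and sm: "strict_mono nk" and dp: "\<delta> > 0"
    and lb: "\<And>k. \<delta> \<le> measure_pmf.prob (Pi_pmf (Lv d (nk k) (nk (Suc k) - nk k)) undefined (Pm d f)) {h. Aev d nk wk k h}"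
  shows "emeasure (ord_measure d f) {om \<in> space (ord_measure d f). \<forall>i. \<not> Aev d nk wk (j + i) om} = 0"
proof -
  let ?M = "ord_measure d f"
  let ?N = "{om \<in> space ?M. \<forall>i. \<not> Aev d nk wk (j + i) om}"
  have PM: "?M = PiM (ord_index d) (\<lambda>i. measure_pmf (Pm d f i))" by (rule ord_measure_eq)
  interpret P: prob_space ?M unfolding PM by (intro prob_space_PiM) (simp add: measure_pmf.prob_space_axioms)
  have Ns: "?N \<in> sets ?M" using pred_Aev by measurable
  have d1: "\<delta> \<le> 1" using lb[of 0] measure_pmf.prob_le_1 order_trans by blast
  have bnd: "measure ?M ?N \<le> (1 - \<delta>) ^ L" for L
  proof -
    let ?J = "Lv d (nk j) (nk (j + L) - nk j)"
    let ?NL = "{om \<in> space ?M. \<forall>i<L. \<not> Aev d nk wk (j + i) om}"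
    have dep: "(\<forall>i<L. \<not> Aev d nk wk (j + i) om) = (\<forall>i<L. \<not> Aev d nk wk (j + i) (restrict om ?J))"
      if om: "om \<in> PiE (ord_index d) (\<lambda>_. UNIV)" for om
    proof -
      have "Aev d nk wk (j + i) om = Aev d nk wk (j + i) (restrict om ?J)" if "i < L" for i
        by (rule Aev_dep[OF sm, of j "j + i" L]) (use that in simp, use that in simp, rule restrict_Lv[OF om])
      thus ?thesis by auto
    qed
    note md = meas_dep[where J="?J" and I="ord_index d" and P="\<lambda>om. \<forall>i<L. \<not> Aev d nk wk (j + i) om" and Q="Pm d f", OF Lv_fin Lv_sub dep]
    have NLs: "?NL \<in> sets ?M" unfolding PM by (rule md(1))
    have NLm: "emeasure ?M ?NL = emeasure (measure_pmf (Pi_pmf ?J undefined (Pm d f))) {h. \<forall>i<L. \<not> Aev d nk wk (j + i) h}"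
      unfolding PM by (rule md(2))
    have "measure ?M ?N \<le> measure ?M ?NL" by (rule P.finite_measure_mono[OF _ NLs]) auto
    also have "\<dots> = measure_pmf.prob (Pi_pmf ?J undefined (Pm d f)) {h. \<forall>i<L. \<not> Aev d nk wk (j + i) h}"
      using NLm by (simp add: P.emeasure_eq_measure measure_pmf.emeasure_eq_measure)
    also have "\<dots> \<le> (1 - \<delta>) ^ L" by (rule UB[OF sm lb])
    finally show ?thesis .
  qed
  have "(\<lambda>L. (1 - \<delta>) ^ L) \<longlonglongrightarrow> 0" by (rule LIMSEQ_power_zero) (use dp d1 in simp)
  hence "measure ?M ?N \<le> 0" by (rule LIMSEQ_le_const) (use bnd in blast)
  hence "measure ?M ?N = 0" using measure_nonneg[of ?M ?N] by linarith
  thus ?thesis by (simp add: P.emeasure_eq_measure)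
qed

theorem mainTheorem19:
  fixes d :: "nat \<Rightarrow> nat" and f :: "nat \<Rightarrow> nat \<Rightarrow> nat \<Rightarrow> nat"
    and \<epsilon> :: real and nk :: "nat \<Rightarrow> nat" and wk :: "nat \<Rightarrow> nat"
  assumes "bratteli d f" and "aperiodic d f" and "finite_rank d"
    and "\<epsilon> > 0" and "strict_mono nk"
    and "\<And>k. wk k < d (nk k)"
    and "\<And>k v. v < d (nk (Suc k)) \<Longrightarrow> mprod d f (nk k) (nk (Suc k)) v (wk k) \<ge> \<epsilon>"
  shows "emeasure (ord_measure d f) (O_B1 d f) = 1"
proof -
  have br: "bratteli d f" by fact
  have sm: "strict_mono nk" by fact
  have ep: "\<epsilon> > 0" by fact
  have hyp: "\<And>k v. v < d (nk (Suc k)) \<Longrightarrow> mprod d f (nk k) (nk (Suc k)) v (wk k) \<ge> \<epsilon>" by fact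
  obtain K where K: "\<And>n. d n \<le> K" using assms(3) unfolding finite_rank_def by blast
  have dpos: "0 < d n" for n
  proof -
    have "d n \<ge> 1" using br unfolding bratteli_def by blast
    thus ?thesis by simp
  qed
  have e1: "\<epsilon> \<le> 1" using hyp[of 0 0] dpos mprod_bounds[OF br, of 0 "nk (Suc 0)" "nk 0" "wk 0"] by auto
  define \<delta> where "\<delta> = \<epsilon> ^ K"
  have dp: "\<delta> > 0" using ep by (simp add: \<delta>_def)
  have lb: "\<delta> \<le> measure_pmf.prob (Pi_pmf (Lv d (nk k) (nk (Suc k) - nk k)) undefined (Pm d f)) {h. Aev d nk wk k h}" for k
  proof -
    let ?a = "nk k" and ?l = "nk (Suc k) - nk k"
    have lt: "nk k < nk (Suc k)" using sm by (simp add: strict_monoD)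
    have s: "?a + ?l = nk (Suc k)" using lt by simp
    have set: "{h. Aev d nk wk k h} = {h. \<forall>v\<in>{..<d (?a + ?l)}. walk h ?a ?l v = wk k}"
      unfolding Aev_def s by auto
    have LBk: "(\<Prod>v\<in>{..<d (?a + ?l)}. mprod d f ?a (?a + ?l) v (wk k))
      \<le> measure_pmf.prob (Pi_pmf (Lv d ?a ?l) undefined (Pm d f)) {h. \<forall>v\<in>{..<d (?a + ?l)}. walk h ?a ?l v = wk k}"
      by (rule LB[OF br]) simp
    have "\<delta> \<le> \<epsilon> ^ d (nk (Suc k))" unfolding \<delta>_def using K ep e1 by (intro power_decreasing) auto
    also have "\<dots> = (\<Prod>v\<in>{..<d (nk (Suc k))}. \<epsilon>)" by simp
    also have "\<dots> \<le> (\<Prod>v\<in>{..<d (nk (Suc k))}. mprod d f ?a (nk (Suc k)) v (wk k))"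
      using hyp ep by (intro prod_mono) auto
    also have "\<dots> \<le> measure_pmf.prob (Pi_pmf (Lv d ?a ?l) undefined (Pm d f)) {h. Aev d nk wk k h}"
      using LBk unfolding set s .
    finally show ?thesis .
  qed
  let ?M = "ord_measure d f"
  have PM: "?M = PiM (ord_index d) (\<lambda>i. measure_pmf (Pm d f i))" by (rule ord_measure_eq)
  interpret P: prob_space ?M unfolding PM by (intro prob_space_PiM) (simp add: measure_pmf.prob_space_axioms)
  have AEv1: "AE om in ?M. v < d (Suc n) \<longrightarrow> om (n, v) \<in> orders d f n v" for n v
  proof (cases "v < d (Suc n)")
    case True
    have "AE om in PiM (ord_index d) (\<lambda>i. measure_pmf (Pm d f i)). om (n, v) \<in> orders d f n v"
    proof (rule AE_PiM_component[where P="\<lambda>x. x \<in> orders d f n v"])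
      show "(n, v) \<in> ord_index d" using True by (simp add: ord_index_def)
      show "AE x in measure_pmf (Pm d f (n, v)). x \<in> orders d f n v"
        using orders_fin_ne[OF br True] by (simp add: AE_measure_pmf_iff Pm_def)
    qed (simp add: measure_pmf.prob_space_axioms)
    thus ?thesis unfolding PM by (rule eventually_mono) simp
  qed simp
  have AEv: "AE om in ?M. valid d f om"
    unfolding valid_def using AEv1 by (simp add: AE_all_countable)
  have AEj: "AE om in ?M. \<exists>i. Aev d nk wk (j + i) om" for j
  proof -
    have Ns: "{om \<in> space ?M. \<forall>i. \<not> Aev d nk wk (j + i) om} \<in> sets ?M" using pred_Aev by measurable
    show ?thesis
      by (subst AE_iff_measurable[OF Ns]) (simp_all add: null_tail[OF br sm dp lb])
  qed
  have AEio: "AE om in ?M. \<forall>j. \<exists>i. Aev d nk wk (j + i) om"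
    using AEj by (simp add: AE_all_countable)
  have "AE om in ?M. om \<in> O_B1 d f"
    using AEv AEio AE_space
  proof (eventually_elim)
    case (elim om)
    show ?case by (rule final_det[OF br sm elim(3) elim(1)]) (use elim(2) in blast)
  qed
  thus ?thesis by (rule P.emeasure_eq_1_AE[OF OB1_sets[OF br]])
qed

end
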